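(* Let $(V_n)_{n\ge1}$ be a sequence in $\mathcal{V}$ with $\mathcal{L}_{V_n}(0)\to\infty$. The following are equivalent: (1) $(\mathcal{L}_{V_n})$ has a cutoff; (2) for all $\epsilon>0$ and $c>0$, $T_{V_n}(\epsilon)\lambda_{V_n}(c)\to\infty$; (3) there is $\epsilon>0$ such that $T_{V_n}(\epsilon)\lambda_{V_n}(c)\to\infty$ for all $c>0$; (4) for all $c>0$, $\tau_{V_n}(c)\lambda_{V_n}(c)\to\infty$; (5) for all $\tilde c>0$ and $c>0$, $\tau_{V_n}(\tilde c)\lambda_{V_n}(c)\to\infty$; (6) there is $\tilde c>0$ such that $\tau_{V_n}(\tilde c)\lambda_{V_n}(c)\to\infty$ for all $c>0$. Moreover, if $(\mathcal{L}_{V_n})$ has a cutoff, then $\tau_{V_n}(c)$ is a cutoff time for every $c>0$, and \[ |T_{V_n}(\epsilon)-T_{V_n}(\delta)|=O(1/\lambda_{V_n}(c))\quad\forall\epsilon,\delta,c\in(0,\infty), \] \[ |T_{V_n}(\epsilon)-\tau_{V_n}(c)|=O\Big(\sqrt{\tau_{V_n}(c)/\lambda_{V_n}(c)}\Big)\quad\forall\epsilon,c\in(0,\infty). \]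
   Context: $\mathcal{V}$ is the class of non-decreasing right-continuous $V:(0,\infty)\to\mathbb{R}$ with $\lim_{\lambda\to0^+}V(\lambda)=0$, $\lim_{\lambda\to\infty}V(\lambda)<\infty$; $\mathcal{L}_V(t)=\int_{(0,\infty)}e^{-t\lambda}dV(\lambda)$ for $t\ge0$. Mixing time: $T_V(\epsilon)=\min\{t\ge0:\mathcal{L}_V(t)\le\epsilon\}$. For $c\in(0,\mathcal{L}_V(0))$: $\lambda_V(c)=\inf\{\lambda:V(\lambda)>c\}$ and $\tau_V(c)=\sup_{\lambda\ge\lambda_V(c)}\frac{\log(1+V(\lambda))}{\lambda}$ (these are defined for all large $n$ since $\mathcal{L}_{V_n}(0)\to\infty$). Cutoff: with $M=\limsup_n\mathcal{L}_{V_n}(0)$, there exist $t_n>0$ with $\mathcal{L}_{V_n}(at_n)\to0$ for all $a>1$ and $\mathcal{L}_{V_n}(at_n)\to M$ for all $a\in(0,1)$; $t_n$ is then a cutoff time. For positive sequences, $a_n=O(b_n)$ means $\sup_n a_n/b_n<\infty$. *)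

theory Defs
  imports "HOL-Analysis.Analysis" "HOL-Library.Landau_Symbols"
begin

text \<open>The class V: non-decreasing, right-continuous functions on (0,oo) with
  limit 0 at 0+ and a finite limit at +oo.  Values on (-oo,0] are irrelevant.\<close>
definition classV :: "(real \<Rightarrow> real) set" where
  "classV = {V. mono_on {0<..} V
              \<and> (\<forall>l>0. continuous (at_right l) V)
              \<and> (V \<longlongrightarrow> 0) (at_right 0)
              \<and> (\<exists>L. (V \<longlongrightarrow> L) at_top)}"

text \<open>Extension of V by 0 to (-oo,0]; used to build the Lebesgue--Stieltjes measure dV.\<close>
definition extV :: "(real \<Rightarrow> real) \<Rightarrow> real \<Rightarrow> real" where
  "extV V l = (if l > 0 then V l else 0)"

definition LV :: "(real \<Rightarrow> real) \<Rightarrow> real \<Rightarrow> real" where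
  "LV V t = (LINT l:{0<..}|interval_measure (extV V). exp (- t * l))"

definition TV :: "(real \<Rightarrow> real) \<Rightarrow> real \<Rightarrow> real" where
  "TV V eps = (LEAST t. t \<ge> 0 \<and> LV V t \<le> eps)"

definition lamV :: "(real \<Rightarrow> real) \<Rightarrow> real \<Rightarrow> real" where
  "lamV V c = Inf {l. l > 0 \<and> V l > c}"

definition tauV :: "(real \<Rightarrow> real) \<Rightarrow> real \<Rightarrow> real" where
  "tauV V c = (SUP l\<in>{lamV V c..}. ln (1 + V l) / l)"

definition cutoff_time :: "(nat \<Rightarrow> real \<Rightarrow> real) \<Rightarrow> (nat \<Rightarrow> real) \<Rightarrow> bool" where
  "cutoff_time f t \<longleftrightarrow>
     (\<forall>n. t n > 0)
     \<and> (\<forall>a>1. (\<lambda>n. f n (a * t n)) \<longlonglongrightarrow> 0)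
     \<and> (\<forall>a. 0 < a \<and> a < 1 \<longrightarrow>
           (\<lambda>n. ereal (f n (a * t n))) \<longlonglongrightarrow> limsup (\<lambda>n. ereal (f n 0)))"

definition has_cutoff :: "(nat \<Rightarrow> real \<Rightarrow> real) \<Rightarrow> bool" where
  "has_cutoff f \<longleftrightarrow> (\<exists>t. cutoff_time f t)"

end

theory Submission
  imports Defs "HOL-Real_Asymp.Real_Asymp"
begin


locale vfun =
  fixes V :: "real \<Rightarrow> real"
  assumes hV: "V \<in> classV"
begin

definition W where "W = Lim at_top V"
abbreviation M where "M \<equiv> interval_measure (extV V)"
abbreviation L where "L \<equiv> LV V"

lemma monoV: "0 < x \<Longrightarrow> x \<le> y \<Longrightarrow> V x \<le> V y"
  using hV unfolding classV_def by (auto intro: mono_onD)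

lemma V0: "(V \<longlongrightarrow> 0) (at_right 0)"
  using hV unfolding classV_def by auto

lemma VW: "(V \<longlongrightarrow> W) at_top"
proof -
  obtain L0 where "(V \<longlongrightarrow> L0) at_top" using hV unfolding classV_def by auto
  then show ?thesis unfolding W_def using tendsto_Lim by (metis convergent_def trivial_limit_at_top_linorder)
qed

lemma V_nonneg: assumes "0 < x" shows "0 \<le> V x"
proof -
  have "eventually (\<lambda>y. V y \<le> V x) (at_right 0)"
    using assms unfolding eventually_at_right_field
    by (intro exI[of _ x]) (auto intro: monoV)
  from tendsto_upperbound[OF V0 this] show ?thesis by simp
qed

lemma V_le_W: assumes "0 < x" shows "V x \<le> W"
proof -
  have "eventually (\<lambda>y. V x \<le> V y) at_top"
    using assms unfolding eventually_at_top_linorder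
    by (intro exI[of _ x]) (auto intro: monoV)
  from tendsto_lowerbound[OF VW this] show ?thesis by simp
qed

lemma W_nonneg: "0 \<le> W" using V_nonneg[of 1] V_le_W[of 1] by simp

lemma extV_mono: "x \<le> y \<Longrightarrow> extV V x \<le> extV V y"
  unfolding extV_def using V_nonneg monoV by auto

lemma extV_rcont: "continuous (at_right a) (extV V)"
proof (cases "a < 0")
  case True
  have "eventually (\<lambda>x. extV V x = 0) (at_right a)"
    unfolding eventually_at_right_field using True
    by (intro exI[of _ 0]) (auto simp: extV_def)
  then have "((extV V) \<longlongrightarrow> 0) (at_right a)" by (rule tendsto_eventually)
  then show ?thesis using True unfolding continuous_within by (simp add: extV_def)
next
  case False
  show ?thesis
  proof (cases "a = 0")
    case True
    have "((extV V) \<longlongrightarrow> 0) (at_right 0)"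
    proof (rule Lim_transform_eventually[OF V0])
      show "\<forall>\<^sub>F x in at_right 0. V x = extV V x"
        by (simp add: eventually_at_right_field extV_def) (auto intro: exI[of _ 1])
    qed
    then show ?thesis using True unfolding continuous_within by (simp add: extV_def)
  next
    case F2: False
    then have a: "a > 0" using False by simp
    have "continuous (at_right a) V" using hV a unfolding classV_def by auto
    then have "(V \<longlongrightarrow> V a) (at_right a)" unfolding continuous_within by simp
    then have "((extV V) \<longlongrightarrow> V a) (at_right a)"
    proof (rule Lim_transform_eventually)
      show "\<forall>\<^sub>F x in at_right a. V x = extV V x"
        unfolding eventually_at_right_field using a
        by (intro exI[of _ "a+1"]) (auto simp: extV_def)
    qed
    then show ?thesis using a unfolding continuous_within by (simp add: extV_def)
  qed
qed

lemma emeas_Ioc: "a \<le> b \<Longrightarrow> emeasure M {a<..b} = ennreal (extV V b - extV V a)"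
  using emeasure_interval_measure_Ioc[of a b "extV V", OF _ extV_mono extV_rcont] by auto

lemma sets_M[simp]: "sets M = sets borel" by simp

lemma emeas_pos: "emeasure M {0<..} \<le> ennreal W"
proof -
  let ?A = "\<lambda>n::nat. {0<..real n}"
  have "(SUP n. emeasure M (?A n)) = emeasure M (\<Union>n. ?A n)"
    by (rule SUP_emeasure_incseq) (auto simp: incseq_def)
  moreover have "(\<Union>n. ?A n) = {0<..}"
    using real_arch_simple by (auto, meson le_less_trans less_le_not_le)
  moreover have "emeasure M (?A n) \<le> ennreal W" for n
    using emeas_Ioc[of 0 "real n"] V_le_W[of "real n"] W_nonneg
    by (cases "n = 0") (auto simp: extV_def)
  ultimately show ?thesis by (metis SUP_least)
qed

lemma fin_pos: "emeasure M {0<..} < \<infinity>"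
  using emeas_pos by (simp add: le_less_trans)

lemma measure_pos: "measure M {0<..} \<le> W"
  using emeas_pos W_nonneg by (simp add: measure_def enn2real_leI)

lemma measure_Ioc: "0 \<le> a \<Longrightarrow> a \<le> b \<Longrightarrow> measure M {a<..b} = extV V b - extV V a"
  using emeas_Ioc[of a b] extV_mono[of a b] by (simp add: measure_def)

lemma measure_Ioc0: "0 < b \<Longrightarrow> measure M {0<..b} = V b"
  using measure_Ioc[of 0 b] by (simp add: extV_def)

lemma int_Ioc0: "0 < b \<Longrightarrow> integral\<^sup>L M (indicator {0<..b}) = V b"
  using measure_Ioc0 by simp

lemma int_Ioc: "0 < a \<Longrightarrow> a \<le> b \<Longrightarrow> integral\<^sup>L M (indicator {a<..b}) = V b - V a"
  using measure_Ioc[of a b] by (simp add: extV_def)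

lemma intble_Ioc: "0 \<le> a \<Longrightarrow> integrable M (indicator {a<..b} :: real \<Rightarrow> real)"
proof (rule integrable_real_indicator)
  assume "0 \<le> a"
  have "emeasure M {a<..b} \<le> emeasure M {0<..}"
    using \<open>0 \<le> a\<close> by (intro emeasure_mono) auto
  then show "emeasure M {a<..b} < \<infinity>" using fin_pos by (simp add: le_less_trans)
qed simp

lemma intble_pos: "integrable M (indicator {0<..} :: real \<Rightarrow> real)"
  using fin_pos by (intro integrable_real_indicator) auto

lemma int_pos: "integral\<^sup>L M (indicator {0<..}) \<le> W"
  using measure_pos by simp

lemma L_def': "L t = integral\<^sup>L M (\<lambda>l. indicator {0<..} l * exp (- t * l))"
  unfolding LV_def set_lebesgue_integral_def by simp

lemma intble_exp: assumes "0 \<le> t" shows "integrable M (\<lambda>l. indicator {0<..} l * exp (- t * l))"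
proof (rule Bochner_Integration.integrable_bound[OF intble_pos])
  show "(\<lambda>l. indicator {0<..} l * exp (- t * l)) \<in> borel_measurable M" by simp
  show "AE x in M. norm (indicator {0<..} x * exp (- t * x)) \<le> norm (indicator {0<..} x :: real)"
    using assms by (auto simp: indicator_def mult_nonneg_nonneg)
qed

end

context vfun begin

lemma L_nonneg: "0 \<le> L t"
  unfolding L_def' by (rule integral_nonneg_AE) (auto simp: indicator_def)

lemma L_lower: assumes "0 \<le> t" "0 < l" shows "exp (- t * l) * V l \<le> L t"
proof -
  have "exp (- t * l) * V l = integral\<^sup>L M (\<lambda>x. exp (- t * l) * indicator {0<..l} x)"
    using int_Ioc0[OF assms(2)] by simp
  also have "\<dots> \<le> L t" unfolding L_def'
  proof (rule integral_mono)
    show "integrable M (\<lambda>x. exp (- t * l) * indicator {0<..l} x)"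
      using intble_Ioc[of 0 l] by simp
    show "integrable M (\<lambda>l. indicator {0<..} l * exp (- t * l))" by (rule intble_exp[OF assms(1)])
    fix x show "exp (- t * l) * indicator {0<..l} x \<le> indicator {0<..} x * exp (- t * x)"
      using assms by (auto simp: indicator_def mult_left_mono)
  qed
  finally show ?thesis .
qed

lemma L_mono: assumes "0 \<le> t" "t \<le> t'" shows "L t' \<le> L t"
  unfolding L_def'
proof (rule integral_mono)
  show "integrable M (\<lambda>l. indicator {0<..} l * exp (- t' * l))" by (rule intble_exp) (use assms in auto)
  show "integrable M (\<lambda>l. indicator {0<..} l * exp (- t * l))" by (rule intble_exp[OF assms(1)])
  fix x show "indicator {0<..} x * exp (- t' * x) \<le> indicator {0<..} x * exp (- t * x)"
    using assms by (auto simp: indicator_def mult_right_mono)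
qed

lemma L0: "L 0 \<le> W"
  using int_pos unfolding L_def' by simp

lemma L_KU: assumes "0 \<le> t" "0 \<le> s" "0 < a" "a \<le> b"
  shows "L (t + s) \<le> V a + exp (- (t + s) * a) * V b + exp (- s * b) * L t"
proof -
  have "L (t + s) \<le> integral\<^sup>L M (\<lambda>x. indicator {0<..a} x + exp (- (t + s) * a) * indicator {0<..b} x
          + exp (- s * b) * (indicator {0<..} x * exp (- t * x)))"
    unfolding L_def'
  proof (rule integral_mono)
    show "integrable M (\<lambda>l. indicator {0<..} l * exp (- (t + s) * l))" by (rule intble_exp) (use assms in auto)
    show "integrable M (\<lambda>x. indicator {0<..a} x + exp (- (t + s) * a) * indicator {0<..b} x
          + exp (- s * b) * (indicator {0<..} x * exp (- t * x)))"
      using intble_Ioc[of 0 a] intble_Ioc[of 0 b] intble_exp[OF assms(1)] by auto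
    fix x
    define A1 where "A1 = (indicator {0<..a} x :: real)"
    define A2 where "A2 = exp (- (t + s) * a) * (indicator {0<..b} x :: real)"
    define A3 where "A3 = exp (- s * b) * (indicator {0<..} x * exp (- t * x) :: real)"
    have nn: "0 \<le> A1" "0 \<le> A2" "0 \<le> A3" unfolding A1_def A2_def A3_def by (auto simp: indicator_def)
    have "indicator {0<..} x * exp (- (t + s) * x) \<le> A1 \<or> indicator {0<..} x * exp (- (t + s) * x) \<le> A2 \<or>
          indicator {0<..} x * exp (- (t + s) * x) \<le> A3"
    proof (cases "x \<le> 0")
      case True then show ?thesis using nn by (simp add: indicator_def)
    next
      case False
      show ?thesis
      proof (cases "x \<le> a")
        case True
        have "0 \<le> (t + s) * x" using False assms by (intro mult_nonneg_nonneg) auto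
        then have "- (t + s) * x \<le> 0" by (metis mult_minus_left neg_le_0_iff_le)
        then have e1: "exp (- (t + s) * x) \<le> 1" by (simp only: exp_le_one_iff)
        then show ?thesis using True False unfolding A1_def by (simp add: indicator_def)
      next
        case F2: False
        show ?thesis
        proof (cases "x \<le> b")
          case True
          have "(t + s) * a \<le> (t + s) * x" using F2 assms by (intro mult_left_mono) auto
          then have "exp (- ((t + s) * x)) \<le> exp (- ((t + s) * a))" by (simp only: exp_le_cancel_iff neg_le_iff_le)
          then have "exp (- (t + s) * x) \<le> exp (- (t + s) * a)" by (simp only: mult_minus_left)
          then show ?thesis using True False F2 unfolding A2_def by (auto simp: indicator_def)
        next
          case F3: False
          have "exp (- (t + s) * x) = exp (- s * x) * exp (- t * x)" by (simp add: algebra_simps flip: exp_add)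
          also have "\<dots> \<le> exp (- s * b) * exp (- t * x)" using F3 assms by (auto intro: mult_left_mono)
          finally show ?thesis using False F2 F3 unfolding A3_def by (auto simp: indicator_def)
        qed
      qed
    qed
    then show "indicator {0<..} x * exp (- (t + s) * x) \<le> indicator {0<..a} x + exp (- (t + s) * a) * indicator {0<..b} x
          + exp (- s * b) * (indicator {0<..} x * exp (- t * x))"
      using nn unfolding A1_def A2_def A3_def by linarith
  qed
  also have "\<dots> = V a + exp (- (t + s) * a) * V b + exp (- s * b) * L t"
    using intble_Ioc[of 0 a] intble_Ioc[of 0 b] intble_exp[OF assms(1)] int_Ioc0[of a] int_Ioc0[of b] assms
    by (simp add: L_def')
  finally show ?thesis .
qed

lemma L_GU: assumes "0 \<le> t" "0 < a" "a \<le> b" "0 < h"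
  shows "L t \<le> V a + exp (- t * a) * V b + (\<Sum>k<N. exp (- t * (b + real k * h)) * V (b + real (Suc k) * h))
            + exp (- t * (b + real N * h)) * W"
proof -
  define g where "g x = indicator {0<..a} x + exp (- t * a) * indicator {0<..b} x
     + (\<Sum>k<N. exp (- t * (b + real k * h)) * indicator {b + real k * h<..b + real (Suc k) * h} x)
     + exp (- t * (b + real N * h)) * indicator {0<..} x" for x :: real
  have ib: "0 \<le> b + real k * h" for k using assms by auto
  have ig: "integrable M g" unfolding g_def
    by (intro Bochner_Integration.integrable_add Bochner_Integration.integrable_sum integrable_mult_right
        intble_Ioc intble_pos ib) simp_all
  have "L t \<le> integral\<^sup>L M g"
    unfolding L_def'
  proof (rule integral_mono[OF intble_exp[OF assms(1)] ig])
    fix x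
    define S where "S = (\<Sum>k<N. exp (- t * (b + real k * h)) * indicator {b + real k * h<..b + real (Suc k) * h} x)"
    define A1 where "A1 = (indicator {0<..a} x :: real)"
    define A2 where "A2 = exp (- t * a) * (indicator {0<..b} x :: real)"
    define A4 where "A4 = exp (- t * (b + real N * h)) * (indicator {0<..} x :: real)"
    have gx: "g x = A1 + A2 + S + A4" unfolding g_def A1_def A2_def A4_def S_def by simp
    have nn: "0 \<le> S" "0 \<le> A1" "0 \<le> A2" "0 \<le> A4" unfolding S_def A1_def A2_def A4_def
      by (auto intro: sum_nonneg)
    have "indicator {0<..} x * exp (- t * x) \<le> A1 \<or> indicator {0<..} x * exp (- t * x) \<le> A2 \<or>
          indicator {0<..} x * exp (- t * x) \<le> S \<or> indicator {0<..} x * exp (- t * x) \<le> A4"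
    proof (cases "x \<le> 0")
      case True then show ?thesis using nn by (simp add: indicator_def)
    next
      case False
      show ?thesis
      proof (cases "x \<le> a")
        case True
        have "0 \<le> t * x" using False assms by (intro mult_nonneg_nonneg) auto
        then have "exp (- (t * x)) \<le> 1" by simp
        then show ?thesis using True False unfolding A1_def by (simp add: indicator_def)
      next
        case F2: False
        show ?thesis
        proof (cases "x \<le> b")
          case True
          have "exp (- t * x) \<le> exp (- t * a)" using F2 assms by (auto intro: mult_left_mono)
          then show ?thesis using True False F2 unfolding A2_def by (auto simp: indicator_def)
        next
          case F3: False
          show ?thesis
          proof (cases "x \<le> b + real N * h")
            case F4: True
            define m where "m = \<lceil>(x - b) / h\<rceil>"
            have q: "0 < (x - b) / h" using F3 assms by auto
            have m1: "1 \<le> m" unfolding m_def using q by (simp add: one_le_ceiling)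
            have "real_of_int m - 1 < (x - b) / h" "(x - b) / h \<le> real_of_int m" unfolding m_def
              by linarith+
            then have mb: "b + (real_of_int m - 1) * h < x" "x \<le> b + real_of_int m * h"
              using assms by (auto simp: field_simps)
            have "(x - b) / h \<le> real N" using F4 assms by (simp add: field_simps)
            then have mN: "m \<le> int N" unfolding m_def by linarith
            define k where "k = nat (m - 1)"
            have kN: "k < N" unfolding k_def using m1 mN by auto
            have rk: "real k = real_of_int m - 1" unfolding k_def using m1 by auto
            have x1: "b + real k * h < x" using mb(1) rk by simp
            have x2: "x \<le> b + real (Suc k) * h" using mb(2) rk by simp
            have xin: "x \<in> {b + real k * h<..b + real (Suc k) * h}" using x1 x2 by simp
            have "exp (- t * x) \<le> exp (- t * (b + real k * h))"
              using xin assms by (auto intro: mult_left_mono)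
            also have "\<dots> = exp (- t * (b + real k * h)) * indicator {b + real k * h<..b + real (Suc k) * h} x"
              using xin by simp
            also have "\<dots> \<le> S" unfolding S_def
              by (rule member_le_sum[of k "{..<N}" "\<lambda>k. exp (- t * (b + real k * h)) * indicator {b + real k * h<..b + real (Suc k) * h} x"])
                 (use kN in auto)
            finally show ?thesis using False by (auto simp: indicator_def)
          next
            case F4: False
            have "exp (- t * x) \<le> exp (- t * (b + real N * h))" using F4 assms by (auto intro: mult_left_mono)
            then show ?thesis using False unfolding A4_def by (auto simp: indicator_def)
          qed
        qed
      qed
    qed
    then show "indicator {0<..} x * exp (- t * x) \<le> g x" unfolding gx using nn by linarith
  qed
  also have "integral\<^sup>L M g = V a + exp (- t * a) * V b
     + (\<Sum>k<N. exp (- t * (b + real k * h)) * (V (b + real (Suc k) * h) - V (b + real k * h)))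
     + exp (- t * (b + real N * h)) * measure M {0<..}"
  proof -
    have isum: "integral\<^sup>L M (\<lambda>x. \<Sum>k<N. exp (- t * (b + real k * h)) * indicator {b + real k * h<..b + real (Suc k) * h} x)
       = (\<Sum>k<N. exp (- t * (b + real k * h)) * (V (b + real (Suc k) * h) - V (b + real k * h)))"
    proof (subst Bochner_Integration.integral_sum)
      show "integrable M (\<lambda>x. exp (- t * (b + real k * h)) * indicator {b + real k * h<..b + real (Suc k) * h} x)" for k
        using intble_Ioc[OF ib] by auto
      show "(\<Sum>k<N. integral\<^sup>L M (\<lambda>x. exp (- t * (b + real k * h)) * indicator {b + real k * h<..b + real (Suc k) * h} x))
           = (\<Sum>k<N. exp (- t * (b + real k * h)) * (V (b + real (Suc k) * h) - V (b + real k * h)))"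
      proof (rule sum.cong[OF refl])
        fix k
        have "0 < b + real k * h" using assms by (simp add: add_pos_nonneg)
        then show "integral\<^sup>L M (\<lambda>x. exp (- t * (b + real k * h)) * indicator {b + real k * h<..b + real (Suc k) * h} x)
           = exp (- t * (b + real k * h)) * (V (b + real (Suc k) * h) - V (b + real k * h))"
          using int_Ioc[of "b + real k * h" "b + real (Suc k) * h"] assms by simp
      qed
    qed
    define S where "S = (\<lambda>x. \<Sum>k<N. exp (- t * (b + real k * h)) * indicator {b + real k * h<..b + real (Suc k) * h} x :: real)"
    have iS: "integrable M S" unfolding S_def
      by (intro Bochner_Integration.integrable_sum integrable_mult_right intble_Ioc ib)
    have i1: "integrable M (indicator {0<..a} :: real \<Rightarrow> real)" by (rule intble_Ioc) simp
    have i2: "integrable M (\<lambda>x. exp (- t * a) * indicator {0<..b} x :: real)"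
      by (intro integrable_mult_right intble_Ioc) simp
    have i4: "integrable M (\<lambda>x. exp (- t * (b + real N * h)) * indicator {0<..} x :: real)"
      by (intro integrable_mult_right intble_pos)
    have gg: "g = (\<lambda>x. (indicator {0<..a} x + exp (- t * a) * indicator {0<..b} x + S x) + exp (- t * (b + real N * h)) * indicator {0<..} x)"
      unfolding g_def S_def by simp
    have "integral\<^sup>L M g = integral\<^sup>L M (\<lambda>x. indicator {0<..a} x + exp (- t * a) * indicator {0<..b} x + S x)
          + integral\<^sup>L M (\<lambda>x. exp (- t * (b + real N * h)) * indicator {0<..} x)"
      unfolding gg by (rule Bochner_Integration.integral_add) (intro Bochner_Integration.integrable_add i1 i2 iS i4)+
    also have "integral\<^sup>L M (\<lambda>x. indicator {0<..a} x + exp (- t * a) * indicator {0<..b} x + S x)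
        = integral\<^sup>L M (\<lambda>x. indicator {0<..a} x + exp (- t * a) * indicator {0<..b} x) + integral\<^sup>L M S"
      by (rule Bochner_Integration.integral_add) (intro Bochner_Integration.integrable_add i1 i2 iS i4)+
    also have "integral\<^sup>L M (\<lambda>x. indicator {0<..a} x + exp (- t * a) * indicator {0<..b} x)
        = integral\<^sup>L M (indicator {0<..a}) + integral\<^sup>L M (\<lambda>x. exp (- t * a) * indicator {0<..b} x)"
      by (rule Bochner_Integration.integral_add) (intro Bochner_Integration.integrable_add i1 i2 iS i4)+
    finally have ig: "integral\<^sup>L M g = integral\<^sup>L M (indicator {0<..a}) + integral\<^sup>L M (\<lambda>x. exp (- t * a) * indicator {0<..b} x)
       + integral\<^sup>L M S + integral\<^sup>L M (\<lambda>x. exp (- t * (b + real N * h)) * indicator {0<..} x)" .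
    moreover have "integral\<^sup>L M (\<lambda>x. exp (- t * a) * indicator {0<..b} x) = exp (- t * a) * V b"
      using int_Ioc0[of b] assms by (simp only: integral_mult_right_zero)
    moreover have "integral\<^sup>L M (\<lambda>x. exp (- t * (b + real N * h)) * indicator {0<..} x)
       = exp (- t * (b + real N * h)) * measure M {0<..}"
      by (simp only: integral_mult_right_zero) simp
    moreover have "integral\<^sup>L M (indicator {0<..a}) = V a" using int_Ioc0[of a] assms by simp
    ultimately show ?thesis using ig isum unfolding S_def by linarith
  qed
  also have "\<dots> \<le> V a + exp (- t * a) * V b + (\<Sum>k<N. exp (- t * (b + real k * h)) * V (b + real (Suc k) * h))
            + exp (- t * (b + real N * h)) * W"
  proof -
    have "(\<Sum>k<N. exp (- t * (b + real k * h)) * (V (b + real (Suc k) * h) - V (b + real k * h)))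
       \<le> (\<Sum>k<N. exp (- t * (b + real k * h)) * V (b + real (Suc k) * h))"
    proof (rule sum_mono)
      fix k
      have "0 < b + real k * h" using assms by (simp add: add_pos_nonneg)
      then show "exp (- t * (b + real k * h)) * (V (b + real (Suc k) * h) - V (b + real k * h))
           \<le> exp (- t * (b + real k * h)) * V (b + real (Suc k) * h)"
        using V_nonneg by (intro mult_left_mono) auto
    qed
    moreover have "exp (- t * (b + real N * h)) * measure M {0<..} \<le> exp (- t * (b + real N * h)) * W"
      using measure_pos by (intro mult_left_mono) auto
    ultimately show ?thesis by linarith
  qed
  finally show ?thesis .
qed

end

context vfun begin

abbreviation lam where "lam \<equiv> lamV V"
abbreviation tau where "tau \<equiv> tauV V"
definition good where "good c \<longleftrightarrow> (\<exists>l>0. c < V l)"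

lemma good_of_L0: assumes "c < L 0" shows "good c"
proof -
  have "c < W" using assms L0 by linarith
  then have "eventually (\<lambda>x. c < V x) at_top" using order_tendstoD(1)[OF VW] by blast
  then obtain N where "\<And>x. x \<ge> N \<Longrightarrow> c < V x" unfolding eventually_at_top_linorder by blast
  then show ?thesis unfolding good_def by (intro exI[of _ "max N 1"]) auto
qed

lemma good_mono: "good c \<Longrightarrow> c' \<le> c \<Longrightarrow> good c'"
  unfolding good_def by force

lemma small_V: assumes "0 < e" shows "\<exists>b>0. \<forall>y. 0 < y \<and> y < b \<longrightarrow> V y < e"
proof -
  have "eventually (\<lambda>x. V x < e) (at_right 0)" using order_tendstoD(2)[OF V0 assms] .
  then show ?thesis unfolding eventually_at_right_field by auto
qed

lemma lam_le: assumes "0 < l" "c < V l" shows "lam c \<le> l"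
  unfolding lamV_def by (rule cInf_lower) (use assms in \<open>auto intro: bdd_belowI[of _ 0]\<close>)

lemma below_lam: assumes "0 < l" "l < lam c" shows "V l \<le> c"
  using lam_le[of l c] assms by force

lemma lam_pos: assumes "0 < c" "good c" shows "0 < lam c"
proof -
  obtain b where b: "b > 0" "\<And>y. 0 < y \<and> y < b \<Longrightarrow> V y < c" using small_V[OF assms(1)] by auto
  have "b \<le> lam c" unfolding lamV_def
  proof (rule cInf_greatest)
    show "{l. 0 < l \<and> c < V l} \<noteq> {}" using assms(2) unfolding good_def by auto
    fix l assume "l \<in> {l. 0 < l \<and> c < V l}"
    then show "b \<le> l" using b(2)[of l] by force
  qed
  then show ?thesis using b by simp
qed

lemma above_lam: assumes "good c" "0 \<le> lam c" "lam c < l" shows "c < V l"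
proof -
  have "{l. 0 < l \<and> c < V l} \<noteq> {}" using assms(1) unfolding good_def by auto
  from cInf_lessD[OF this, of l] assms obtain l' where "0 < l'" "c < V l'" "l' < l"
    unfolding lamV_def by auto
  then show ?thesis using monoV[of l' l] by simp
qed

lemma lam_mono: assumes "good c" "c' \<le> c" shows "lam c' \<le> lam c"
  unfolding lamV_def
proof (rule cInf_mono)
  show "{l. 0 < l \<and> c < V l} \<noteq> {}" using assms(1) unfolding good_def by auto
  show "bdd_below {l. 0 < l \<and> c' < V l}" by (rule bdd_belowI[of _ 0]) auto
  fix b assume "b \<in> {l. 0 < l \<and> c < V l}"
  then show "\<exists>a\<in>{l. 0 < l \<and> c' < V l}. a \<le> b" using assms by force
qed

lemma tau_bdd: assumes "0 < c" "good c"
  shows "bdd_above ((\<lambda>l. ln (1 + V l) / l) ` {lam c..})"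
proof (rule bdd_aboveI2)
  fix l assume "l \<in> {lam c..}"
  then have l: "lam c \<le> l" "0 < l" using lam_pos[OF assms] by auto
  have "0 \<le> ln (1 + V l)" using V_nonneg[OF l(2)] by simp
  moreover have "ln (1 + V l) \<le> ln (1 + W)" using V_le_W[OF l(2)] V_nonneg[OF l(2)] by simp
  ultimately show "ln (1 + V l) / l \<le> ln (1 + W) / lam c"
    using l lam_pos[OF assms] by (meson divide_mono order.trans)
qed

lemma tau_ge: assumes "0 < c" "good c" "lam c \<le> l" shows "ln (1 + V l) / l \<le> tau c"
  unfolding tauV_def using tau_bdd[OF assms(1,2)] assms(3) by (intro cSUP_upper) auto

lemma V_le_exp: assumes "0 < c" "good c" "lam c \<le> l" shows "1 + V l \<le> exp (tau c * l)"
proof -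
  have l: "0 < l" using lam_pos[OF assms(1,2)] assms(3) by simp
  have "ln (1 + V l) \<le> tau c * l" using tau_ge[OF assms] l by (simp add: pos_divide_le_eq)
  then have "exp (ln (1 + V l)) \<le> exp (tau c * l)" by simp
  then show ?thesis using V_nonneg[OF l] by simp
qed

lemma tau_pos: assumes "0 < c" "good c" shows "0 < tau c"
proof -
  let ?l = "2 * lam c"
  have lp: "0 < lam c" using lam_pos[OF assms] .
  have "c < V ?l" using above_lam[OF assms(2)] lp by simp
  then have "0 < ln (1 + V ?l) / ?l" using assms lp by simp
  also have "\<dots> \<le> tau c" using tau_ge[OF assms] lp by simp
  finally show ?thesis .
qed

lemma tau_approx: assumes "0 < c" "good c" "0 < e" shows "\<exists>l\<ge>lam c. tau c - e < ln (1 + V l) / l"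
proof -
  have "tau c - e < tau c" using assms by simp
  then show ?thesis unfolding tauV_def using less_cSUP_iff[OF _ tau_bdd[OF assms(1,2)]] by auto
qed

lemma tau_anti: assumes "0 < c'" "c' \<le> c" "good c"
  shows "tau c' \<le> max (tau c) (ln (1 + c) / lam c')"
proof -
  have gc': "good c'" using good_mono assms by blast
  have c: "0 < c" using assms by simp
  show ?thesis unfolding tauV_def[of V c']
  proof (rule cSUP_least)
    show "{lam c'..} \<noteq> {}" by simp
    fix l assume "l \<in> {lam c'..}"
    then have l: "lam c' \<le> l" "0 < l" using lam_pos[OF assms(1) gc'] by auto
    show "ln (1 + V l) / l \<le> max (tau c) (ln (1 + c) / lam c')"
    proof (cases "lam c \<le> l")
      case True then show ?thesis using tau_ge[OF c assms(3) True] by simp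
    next
      case False
      then have "V l \<le> c" using below_lam l by simp
      then have "ln (1 + V l) \<le> ln (1 + c)" using V_nonneg[OF l(2)] by simp
      moreover have "0 \<le> ln (1 + V l)" using V_nonneg[OF l(2)] by simp
      ultimately have "ln (1 + V l) / l \<le> ln (1 + c) / lam c'"
        using l lam_pos[OF assms(1) gc'] by (meson divide_mono order.trans)
      then show ?thesis by simp
    qed
  qed
qed

end


lemma exp_neg_to0: fixes a :: real and f :: "'a \<Rightarrow> real" assumes "0 < a" "filterlim f at_top F" shows "((\<lambda>x. exp (- (a * f x))) \<longlongrightarrow> 0) F"
proof -
  have "filterlim (\<lambda>x. a * f x) at_top F"
    by (intro filterlim_tendsto_pos_mult_at_top[where c=a] tendsto_const assms)
  then have "filterlim (\<lambda>x. - (a * f x)) at_bot F" by (simp add: filterlim_uminus_at_top[symmetric])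
  then show ?thesis by (rule filterlim_compose[OF exp_at_bot])
qed
context vfun begin

lemma exp_lim: fixes a K :: real assumes "0 < a" shows "((\<lambda>s. exp (- (a * s)) * K) \<longlongrightarrow> 0) at_top"
proof -
  have "filterlim (\<lambda>s::real. s) at_top at_top" by (rule filterlim_ident)
  from exp_neg_to0[of a "\<lambda>s. s" at_top, OF assms this]
  have "((\<lambda>x. exp (- (a * x))) \<longlongrightarrow> 0) at_top" .
  from tendsto_mult_left_zero[OF this, of K] show ?thesis by simp
qed

lemma L_small: assumes "0 < e" shows "\<exists>t\<ge>0. L t \<le> e"
proof -
  obtain b where b: "b > 0" "\<And>y. 0 < y \<and> y < b \<Longrightarrow> V y < e/2" using small_V[of "e/2"] assms by auto
  define a where "a = b/2"
  have a: "0 < a" "V a < e/2" using b unfolding a_def by auto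
  have "0 < e/2" using assms by simp
  from order_tendstoD(2)[OF exp_lim[OF a(1), of "V a + L 0"] this]
  have "eventually (\<lambda>s. exp (- (a * s)) * (V a + L 0) < e/2) at_top" .
  then obtain s0 where s0: "\<And>s. s \<ge> s0 \<Longrightarrow> exp (- (a * s)) * (V a + L 0) < e/2"
    unfolding eventually_at_top_linorder by blast
  define s where "s = max s0 0"
  have "L (0 + s) \<le> V a + exp (- (0 + s) * a) * V a + exp (- s * a) * L 0"
    by (rule L_KU) (use a s_def in auto)
  also have "\<dots> = V a + exp (- (a * s)) * (V a + L 0)" by (simp add: algebra_simps)
  also have "\<dots> \<le> e" using s0[of s] a unfolding s_def by simp
  finally show ?thesis using s_def by (intro exI[of _ s]) auto
qed

lemma L_rcont: assumes "0 \<le> i" shows "(\<lambda>k. L (i + inverse (real (Suc k)))) \<longlonglongrightarrow> L i"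
  unfolding L_def'
proof (rule integral_dominated_convergence[where w="indicator {0<..} :: real \<Rightarrow> real"])
  show "(\<lambda>x. indicator {0<..} x * exp (- i * x)) \<in> borel_measurable M" by simp
  show "(\<lambda>x. indicator {0<..} x * exp (- (i + inverse (real (Suc k))) * x)) \<in> borel_measurable M" for k by simp
  show "integrable M (indicator {0<..} :: real \<Rightarrow> real)" by (rule intble_pos)
  show "AE x in M. (\<lambda>k. indicator {0<..} x * exp (- (i + inverse (real (Suc k))) * x)) \<longlonglongrightarrow> indicator {0<..} x * exp (- i * x)"
  proof (intro AE_I2)
    fix x
    have "(\<lambda>k. - (i + inverse (real (Suc k))) * x) \<longlonglongrightarrow> - (i + 0) * x"
      by (intro tendsto_intros LIMSEQ_inverse_real_of_nat)
    from tendsto_mult_left[OF tendsto_exp[OF this], of "indicator {0<..} x"]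
    have "(\<lambda>k. indicator {0<..} x * exp (- (i + inverse (real (Suc k))) * x)) \<longlonglongrightarrow> indicator {0<..} x * exp (- (i + 0) * x)" .
    then show "(\<lambda>k. indicator {0<..} x * exp (- (i + inverse (real (Suc k))) * x)) \<longlonglongrightarrow> indicator {0<..} x * exp (- i * x)"
      by simp
  qed
  fix k
  show "AE x in M. norm (indicator {0<..} x * exp (- (i + inverse (real (Suc k))) * x)) \<le> (indicator {0<..} x :: real)"
  proof (intro AE_I2)
    fix x :: real
    have "0 \<le> (i + inverse (real (Suc k))) * x" if "0 < x" using assms that by (intro mult_nonneg_nonneg) auto
    then have "- (i + inverse (real (Suc k))) * x \<le> 0" if "0 < x" using that by (metis mult_minus_left neg_le_0_iff_le)
    then have "exp (- (i + inverse (real (Suc k))) * x) \<le> 1" if "0 < x" using that by (simp only: exp_le_one_iff)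
    then show "norm (indicator {0<..} x * exp (- (i + inverse (real (Suc k))) * x)) \<le> (indicator {0<..} x :: real)"
      by (auto simp: indicator_def)
  qed
qed

lemma T_props: assumes "0 < e"
  shows "0 \<le> TV V e" "L (TV V e) \<le> e" "\<And>t. 0 \<le> t \<Longrightarrow> L t \<le> e \<Longrightarrow> TV V e \<le> t"
proof -
  define S where "S = {t. 0 \<le> t \<and> L t \<le> e}"
  have Sne: "S \<noteq> {}" using L_small[OF assms] unfolding S_def by auto
  have bS: "bdd_below S" unfolding S_def by (rule bdd_belowI[of _ 0]) auto
  define i where "i = Inf S"
  have i0: "0 \<le> i" unfolding i_def using Sne by (intro cInf_greatest) (auto simp: S_def)
  have ilow: "i \<le> t" if "t \<in> S" for t unfolding i_def using bS that by (rule cInf_lower[rotated])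
  have "L (i + inverse (real (Suc k))) \<le> e" for k
  proof -
    have "i < i + inverse (real (Suc k))" by simp
    then obtain s where "s \<in> S" "s < i + inverse (real (Suc k))" using cInf_lessD[OF Sne] unfolding i_def by blast
    then have "L (i + inverse (real (Suc k))) \<le> L s" using L_mono[of s] unfolding S_def by auto
    then show ?thesis using \<open>s \<in> S\<close> unfolding S_def by auto
  qed
  then have Li: "L i \<le> e"
    using tendsto_upperbound[OF L_rcont[OF i0]] by (simp add: eventually_sequentially)
  have "TV V e = i" unfolding TV_def
    by (rule Least_equality) (use i0 Li ilow in \<open>auto simp: S_def\<close>)
  then show "0 \<le> TV V e" "L (TV V e) \<le> e" "\<And>t. 0 \<le> t \<Longrightarrow> L t \<le> e \<Longrightarrow> TV V e \<le> t"
    using i0 Li ilow unfolding S_def by auto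
qed

lemma T_below: assumes "0 < e" "0 \<le> t" "t < TV V e" shows "e < L t"
  using T_props(3)[OF assms(1,2)] assms(3) by force

lemma L_tail: assumes "0 \<le> r" "r < t" "0 < a" "a \<le> b" "0 < h" "\<And>x. b + h \<le> x \<Longrightarrow> V x \<le> exp (r * x)"
  shows "L t \<le> V a + exp (- t * a) * V b + exp (r * (b + h)) * exp (- t * b) / (1 - exp (- (t - r) * h))"
proof -
  define q where "q = exp (- (t - r) * h)"
  define C where "C = exp (r * (b + h)) * exp (- t * b)"
  have "0 < (t - r) * h" using assms by simp
  then have "- (t - r) * h < 0" by (simp only: mult_minus_left neg_less_0_iff_less)
  then have q: "0 < q" "q < 1" unfolding q_def by (auto simp only: exp_less_one_iff exp_gt_zero)
  have t0: "0 \<le> t" using assms by simp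
  have sumb: "(\<Sum>k<N. exp (- t * (b + real k * h)) * V (b + real (Suc k) * h)) \<le> C / (1 - q)" for N
  proof -
    have "(\<Sum>k<N. exp (- t * (b + real k * h)) * V (b + real (Suc k) * h)) \<le> (\<Sum>k<N. C * q ^ k)"
    proof (rule sum_mono)
      fix k
      have "V (b + real (Suc k) * h) \<le> exp (r * (b + real (Suc k) * h))"
        using assms by (intro assms(6)) (auto simp: algebra_simps)
      then have "exp (- t * (b + real k * h)) * V (b + real (Suc k) * h)
          \<le> exp (- t * (b + real k * h)) * exp (r * (b + real (Suc k) * h))" by simp
      also have "\<dots> = C * q ^ k"
      proof -
        have "exp (- t * (b + real k * h)) * exp (r * (b + real (Suc k) * h))
            = exp (r * (b + h) + - t * b + real k * (- (t - r) * h))"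
          by (simp add: algebra_simps flip: exp_add)
        also have "\<dots> = C * q ^ k" unfolding C_def q_def
          by (simp add: exp_add exp_of_nat_mult exp_diff exp_minus divide_inverse)
        finally show ?thesis .
      qed
      finally show "exp (- t * (b + real k * h)) * V (b + real (Suc k) * h) \<le> C * q ^ k" .
    qed
    also have "\<dots> = C * ((1 - q ^ N) / (1 - q))" using q by (simp add: sum_distrib_left[symmetric] sum_gp_strict)
    also have "\<dots> \<le> C / (1 - q)"
    proof -
      have "(1 - q ^ N) / (1 - q) \<le> 1 / (1 - q)" using q by (intro divide_right_mono) auto
      moreover have "0 \<le> C" unfolding C_def by simp
      ultimately have "C * ((1 - q ^ N) / (1 - q)) \<le> C * (1 / (1 - q))" by (rule mult_left_mono)
      then show ?thesis by simp
    qed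
    finally show ?thesis .
  qed
  define G where "G = V a + exp (- t * a) * V b + C / (1 - q)"
  have le: "L t \<le> G + exp (- t * (b + real N * h)) * W" for N
    using L_GU[OF t0 assms(3,4,5), of N] sumb[of N] unfolding G_def by linarith
  have "(\<lambda>N. G + exp (- t * (b + real N * h)) * W) \<longlonglongrightarrow> G + 0"
  proof (intro tendsto_intros)
    have "t * h > 0" using assms by simp
    then have "filterlim (\<lambda>N. - t * (b + real N * h)) at_bot sequentially"
      by real_asymp
    then show "(\<lambda>N. exp (- t * (b + real N * h)) * W) \<longlonglongrightarrow> 0"
      by (intro tendsto_mult_left_zero filterlim_compose[OF exp_at_bot])
  qed
  then have "L t \<le> G" using le by (intro tendsto_lowerbound[where F=sequentially]) auto
  then show ?thesis unfolding G_def C_def q_def .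
qed

end

context vfun begin

lemma U1: assumes "0 < c'" "c' \<le> c" "good c" "2 \<le> tau c * lam c" "0 < u"
  shows "L (tau c + u) \<le> c' + c * exp (- (tau c * lam c' / 2))
          + exp (1 + u / tau c) * exp (- (u * lam c)) / (1 - exp (- (u / tau c)))"
proof -
  have c: "0 < c" using assms by simp
  have gc': "good c'" using good_mono assms by blast
  define tu where "tu = tau c"
  define lm where "lm = lam c"
  define lm' where "lm' = lam c'"
  have tp: "0 < tu" unfolding tu_def using tau_pos[OF c assms(3)] .
  have lp: "0 < lm" unfolding lm_def using lam_pos[OF c assms(3)] .
  have lp': "0 < lm'" unfolding lm'_def using lam_pos[OF assms(1) gc'] .
  have ll: "lm' \<le> lm" unfolding lm_def lm'_def using lam_mono[OF assms(3,2)] .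
  define b where "b = lm - 1 / tu"
  define a where "a = lm' / 2"
  have inv: "1 / tu \<le> lm / 2" using assms(4) tp unfolding tu_def[symmetric] lm_def[symmetric]
    by (simp add: field_simps)
  have a: "0 < a" "a \<le> b" unfolding a_def b_def using lp' ll inv by auto
  have bh: "b + 1 / tu = lm" unfolding b_def by simp
  have hyp: "V x \<le> exp (tu * x)" if "b + 1 / tu \<le> x" for x
    using V_le_exp[OF c assms(3), of x] that bh unfolding tu_def lm_def by simp
  have "L (tu + u) \<le> V a + exp (- (tu + u) * a) * V b + exp (tu * (b + 1 / tu)) * exp (- (tu + u) * b) / (1 - exp (- (tu + u - tu) * (1 / tu)))"
    by (rule L_tail[OF _ _ a]) (use tp assms(5) hyp in auto)
  also have "\<dots> \<le> c' + c * exp (- (tu * lm' / 2)) + exp (1 + u / tu) * exp (- (u * lm)) / (1 - exp (- (u / tu)))"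
  proof -
    have "V a \<le> c'" using below_lam[of a c'] a lp' unfolding a_def lm'_def by simp
    moreover have "exp (- (tu + u) * a) * V b \<le> c * exp (- (tu * lm' / 2))"
    proof -
      have vb: "V b \<le> c" using below_lam[of b c] a lp inv tp unfolding b_def lm_def by simp
      have "0 \<le> V b" using V_nonneg a by simp
      have "tu * lm' / 2 \<le> (tu + u) * a" unfolding a_def using lp' assms(5) by (simp add: field_simps)
      then have "- (tu + u) * a \<le> - (tu * lm' / 2)" by (simp only: mult_minus_left neg_le_iff_le)
      then have "exp (- (tu + u) * a) \<le> exp (- (tu * lm' / 2))" by (simp only: exp_le_cancel_iff)
      then show ?thesis using vb \<open>0 \<le> V b\<close> c by (simp add: mult_mono' mult.commute)
    qed
    moreover have "exp (tu * (b + 1 / tu)) * exp (- (tu + u) * b) = exp (1 + u / tu) * exp (- (u * lm))"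
    proof -
      have "tu * (b + 1 / tu) + - (tu + u) * b = 1 + u / tu + - (u * lm)"
        unfolding b_def using tp by (simp add: field_simps)
      then show ?thesis by (simp flip: exp_add)
    qed
    moreover have "(tu + u - tu) * (1 / tu) = u / tu" by simp
    ultimately show ?thesis by simp
  qed
  finally show ?thesis unfolding tu_def lm_def lm'_def .
qed

lemma U2: assumes "0 < c" "good c" "4 * tau c \<le> t" "4 \<le> t * lam c"
  shows "L t \<le> 2 * c + 2 * exp (- (t * lam c / 4))"
proof -
  define tu where "tu = tau c"
  define lm where "lm = lam c"
  have tp: "0 < tu" unfolding tu_def using tau_pos[OF assms(1,2)] .
  have lp: "0 < lm" unfolding lm_def using lam_pos[OF assms(1,2)] .
  have tt: "4 * tu \<le> t" "4 \<le> t * lm" using assms unfolding tu_def lm_def by auto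
  have hyp: "V x \<le> exp (tu * x)" if "lm / 2 + lm / 2 \<le> x" for x
    using V_le_exp[OF assms(1,2), of x] that unfolding tu_def lm_def by simp
  have "L t \<le> V (lm/2) + exp (- t * (lm/2)) * V (lm/2) + exp (tu * (lm/2 + lm/2)) * exp (- t * (lm/2)) / (1 - exp (- (t - tu) * (lm/2)))"
    by (rule L_tail) (use tp lp tt hyp in auto)
  also have "\<dots> \<le> c + 1 * c + exp (- (t * lm / 4)) / (1/2)"
  proof -
    have v: "V (lm/2) \<le> c" "0 \<le> V (lm/2)" using below_lam[of "lm/2" c] V_nonneg[of "lm/2"] lp unfolding lm_def by auto
    have t0: "0 \<le> t" using tt tp by simp
    have e1: "exp (- t * (lm/2)) \<le> 1" using t0 lp by simp
    have "exp (- t * (lm/2)) * V (lm/2) \<le> 1 * c" using e1 v by (intro mult_mono) auto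
    moreover have "exp (tu * (lm/2 + lm/2)) * exp (- t * (lm/2)) \<le> exp (- (t * lm / 4))"
    proof -
      have "tu * lm \<le> t * lm / 4" using tt lp by (simp add: mult_right_mono[of "4*tu" t lm] field_simps)
      then have "tu * (lm/2 + lm/2) + - t * (lm/2) \<le> - (t * lm / 4)" by (simp add: field_simps)
      then show ?thesis by (simp flip: exp_add)
    qed
    moreover have "1/2 \<le> 1 - exp (- (t - tu) * (lm/2))"
    proof -
      have "tu * lm \<le> t * lm / 4" using tt lp by (simp add: mult_right_mono[of "4*tu" t lm] field_simps)
      then have "3/2 \<le> (t - tu) * (lm/2)" using tt by (simp add: field_simps)
      then have "- (t - tu) * (lm/2) \<le> - (3/2)" by (simp only: mult_minus_left neg_le_iff_le)
      then have "exp (- (t - tu) * (lm/2)) \<le> exp (- (3/2))" by (simp only: exp_le_cancel_iff)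
      also have "exp (- (3/2) :: real) \<le> 1/2"
      proof -
        have "1 + 3/2 \<le> exp (3/2 :: real)" by (rule exp_ge_add_one_self)
        then show ?thesis by (simp add: exp_minus field_simps)
      qed
      finally show ?thesis by simp
    qed
    moreover have "0 \<le> exp (tu * (lm/2 + lm/2)) * exp (- t * (lm/2))" by simp
    ultimately have "exp (tu * (lm/2 + lm/2)) * exp (- t * (lm/2)) / (1 - exp (- (t - tu) * (lm/2)))
        \<le> exp (- (t * lm / 4)) / (1/2)"
      by (intro frac_le) auto
    then show ?thesis using v \<open>exp (- t * (lm/2)) * V (lm/2) \<le> 1 * c\<close> by linarith
  qed
  finally show ?thesis unfolding lm_def by simp
qed

lemma LB: assumes "0 < c" "good c" "0 < e" "0 \<le> t" "t \<le> tau c - e"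
  shows "exp ((tau c - e - t) * lam c) - 1 \<le> L t"
proof -
  obtain l where l: "lam c \<le> l" "tau c - e < ln (1 + V l) / l" using tau_approx[OF assms(1-3)] by auto
  have lp: "0 < lam c" using lam_pos[OF assms(1,2)] .
  then have l0: "0 < l" using l by simp
  have "(tau c - e) * l < ln (1 + V l)" using l(2) l0 by (simp add: field_simps)
  then have "exp ((tau c - e) * l) < exp (ln (1 + V l))" by simp
  then have ev: "exp ((tau c - e) * l) - 1 < V l" using V_nonneg[OF l0] by simp
  have "exp ((tau c - e - t) * lam c) - 1 \<le> exp ((tau c - e - t) * l) - exp (- t * l)"
  proof -
    have "(tau c - e - t) * lam c \<le> (tau c - e - t) * l" using l assms by (intro mult_left_mono) auto
    then have "exp ((tau c - e - t) * lam c) \<le> exp ((tau c - e - t) * l)" by simp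
    moreover have "0 \<le> t * l" using assms l0 by simp
    then have "exp (- t * l) \<le> 1" by simp
    ultimately show ?thesis by linarith
  qed
  also have "\<dots> = exp (- t * l) * (exp ((tau c - e) * l) - 1)"
    by (simp add: algebra_simps flip: exp_add)
  also have "\<dots> \<le> exp (- t * l) * V l" using ev by (intro mult_left_mono) auto
  also have "\<dots> \<le> L t" by (rule L_lower[OF assms(4) l0])
  finally show ?thesis .
qed

lemma U3: assumes "0 < c''" "c'' \<le> c" "good c" "0 \<le> t" "0 \<le> s"
  shows "L (t + s) \<le> c'' + c * exp (- (t * lam c'' / 2)) + exp (- (s * lam c / 2)) * L t"
proof -
  have c: "0 < c" using assms by simp
  have gc'': "good c''" using good_mono assms by blast
  have lp: "0 < lam c" using lam_pos[OF c assms(3)] .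
  have lp'': "0 < lam c''" using lam_pos[OF assms(1) gc''] .
  have ll: "lam c'' \<le> lam c" using lam_mono[OF assms(3,2)] .
  have "L (t + s) \<le> V (lam c'' / 2) + exp (- (t + s) * (lam c'' / 2)) * V (lam c / 2) + exp (- s * (lam c / 2)) * L t"
    by (rule L_KU) (use assms lp'' ll in auto)
  also have "\<dots> \<le> c'' + c * exp (- (t * lam c'' / 2)) + exp (- (s * lam c / 2)) * L t"
  proof -
    have "V (lam c'' / 2) \<le> c''" using below_lam[of "lam c'' / 2" c''] lp'' by simp
    moreover have "exp (- (t + s) * (lam c'' / 2)) * V (lam c / 2) \<le> c * exp (- (t * lam c'' / 2))"
    proof -
      have vb: "V (lam c / 2) \<le> c" "0 \<le> V (lam c / 2)" using below_lam[of "lam c / 2" c] V_nonneg[of "lam c/2"] lp by auto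
      have "0 \<le> s * lam c''" using lp'' assms by simp
      then have "- (t + s) * (lam c'' / 2) \<le> - (t * lam c'' / 2)" by (simp add: algebra_simps)
      then have "exp (- (t + s) * (lam c'' / 2)) \<le> exp (- (t * lam c'' / 2))" by (simp only: exp_le_cancel_iff)
      then show ?thesis using vb c by (simp add: mult_mono' mult.commute)
    qed
    moreover have "exp (- s * (lam c / 2)) * L t = exp (- (s * lam c / 2)) * L t" by simp
    ultimately show ?thesis by linarith
  qed
  finally show ?thesis .
qed

end


lemma to0I: fixes f :: "nat \<Rightarrow> real"
  assumes "\<And>e. 0 < e \<Longrightarrow> eventually (\<lambda>n. f n \<le> e) sequentially" "\<And>n. 0 \<le> f n"
  shows "f \<longlonglongrightarrow> 0"
proof (rule order_tendstoI)
  fix a :: real assume "a < 0" then show "eventually (\<lambda>n. a < f n) sequentially" using assms(2)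
    by (auto intro: always_eventually less_le_trans)
next
  fix a :: real assume "0 < a"
  then have "eventually (\<lambda>n. f n \<le> a/2) sequentially" using assms(1)[of "a/2"] by simp
  then show "eventually (\<lambda>n. f n < a) sequentially" by eventually_elim (use \<open>0 < a\<close> in auto)
qed

lemma ev_le: fixes f :: "nat \<Rightarrow> real" assumes "f \<longlonglongrightarrow> 0" "0 < e" shows "eventually (\<lambda>n. f n \<le> e) sequentially"
  using order_tendstoD(2)[OF assms] by eventually_elim auto

lemma ev_ge: fixes f :: "nat \<Rightarrow> real" assumes "filterlim f at_top sequentially" shows "eventually (\<lambda>n. Z \<le> f n) sequentially"
  using assms unfolding filterlim_at_top by auto

lemma g_lim: "((\<lambda>x::real. exp (1 + 1 / x) * exp (- x) / (1 - exp (- (1 / x)))) \<longlongrightarrow> 0) at_top"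
  by real_asymp

locale vseq =
  fixes V :: "nat \<Rightarrow> real \<Rightarrow> real"
  assumes hV: "\<And>n. V n \<in> classV"
    and hL: "filterlim (\<lambda>n. LV (V n) 0) at_top sequentially"
begin

lemma vf: "vfun (V n)" using hV by (simp add: vfun_def)

lemma ev_good: "eventually (\<lambda>n. vfun.good (V n) c) sequentially"
proof -
  have "eventually (\<lambda>n. c + 1 \<le> LV (V n) 0) sequentially" by (rule ev_ge[OF hL])
  then show ?thesis by eventually_elim (rule vfun.good_of_L0[OF vf], simp)
qed

lemma limsup_inf: "limsup (\<lambda>n. ereal (LV (V n) 0)) = \<infinity>"
  by (rule lim_imp_Limsup) (use hL in \<open>simp_all add: tendsto_PInfty_eq_at_top\<close>)

lemma cut_iff: "cutoff_time (\<lambda>n. LV (V n)) t \<longleftrightarrow> (\<forall>n. 0 < t n) \<and> (\<forall>a>1. (\<lambda>n. LV (V n) (a * t n)) \<longlonglongrightarrow> 0)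
   \<and> (\<forall>a. 0 < a \<and> a < 1 \<longrightarrow> filterlim (\<lambda>n. LV (V n) (a * t n)) at_top sequentially)"
  unfolding cutoff_time_def limsup_inf tendsto_PInfty_eq_at_top ..

lemma L_nn: "0 \<le> LV (V n) t" using vfun.L_nonneg[OF vf] .

end

context vseq begin

lemma A_cutoff:
  assumes c0: "0 < c0" and H: "\<And>c. 0 < c \<Longrightarrow> filterlim (\<lambda>n. tauV (V n) c0 * lamV (V n) c) at_top sequentially"
  shows "\<exists>t. cutoff_time (\<lambda>n. LV (V n)) t \<and> (\<forall>\<^sub>F n in sequentially. t n = tauV (V n) c0)"
proof -
  define t where "t n = (if vfun.good (V n) c0 then tauV (V n) c0 else 1)" for n
  have tpos: "0 < t n" for n unfolding t_def using vfun.tau_pos[OF vf c0] by auto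
  have evt: "\<forall>\<^sub>F n in sequentially. t n = tauV (V n) c0" using ev_good[of c0] by eventually_elim (simp add: t_def)
  have up: "(\<lambda>n. LV (V n) (A * t n)) \<longlonglongrightarrow> 0" if A: "1 < A" for A
  proof (rule to0I[OF _ L_nn])
    fix e :: real assume e: "0 < e"
    define c' where "c' = min (e/3) c0"
    have c': "0 < c'" "c' \<le> c0" "c' \<le> e/3" using e c0 unfolding c'_def by auto
    have e1: "\<forall>\<^sub>F n in sequentially. 2 \<le> tauV (V n) c0 * lamV (V n) c0" using ev_ge[OF H[OF c0]] .
    have e2: "\<forall>\<^sub>F n in sequentially. c0 * exp (- (tauV (V n) c0 * lamV (V n) c' / 2)) \<le> e/3"
    proof -
      have "(\<lambda>n. exp (- ((1/2) * (tauV (V n) c0 * lamV (V n) c')))) \<longlonglongrightarrow> 0"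
        by (rule exp_neg_to0) (use H[OF c'(1)] in auto)
      from tendsto_mult_right_zero[OF this, of c0]
      have "(\<lambda>n. c0 * exp (- (tauV (V n) c0 * lamV (V n) c' / 2))) \<longlonglongrightarrow> 0" by simp
      then show ?thesis by (rule ev_le) (use e in simp)
    qed
    have e3: "\<forall>\<^sub>F n in sequentially. exp (1 + (A - 1)) * exp (- ((A - 1) * (tauV (V n) c0 * lamV (V n) c0))) / (1 - exp (- (A - 1))) \<le> e/3"
    proof -
      have "(\<lambda>n. exp (- ((A - 1) * (tauV (V n) c0 * lamV (V n) c0)))) \<longlonglongrightarrow> 0"
        by (rule exp_neg_to0) (use H[OF c0] A in auto)
      from tendsto_mult_right_zero[OF this, of "exp (1 + (A - 1))"]
      have "(\<lambda>n. exp (1 + (A - 1)) * exp (- ((A - 1) * (tauV (V n) c0 * lamV (V n) c0)))) \<longlonglongrightarrow> 0" .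
      from tendsto_divide_zero[OF this, of "1 - exp (- (A - 1))"]
      have "(\<lambda>n. exp (1 + (A - 1)) * exp (- ((A - 1) * (tauV (V n) c0 * lamV (V n) c0))) / (1 - exp (- (A - 1)))) \<longlonglongrightarrow> 0" .
      then show ?thesis by (rule ev_le) (use e in simp)
    qed
    show "\<forall>\<^sub>F n in sequentially. LV (V n) (A * t n) \<le> e"
      using ev_good[of c0] e1 e2 e3
    proof eventually_elim
      case (elim n)
      interpret vfun "V n" by (rule vf)
      have tn: "t n = tau c0" using elim(1) unfolding t_def by simp
      have tp: "0 < tau c0" using tau_pos[OF c0 elim(1)] .
      have u: "0 < (A - 1) * tau c0" using tp A by simp
      have "L (tau c0 + (A - 1) * tau c0) \<le> c' + c0 * exp (- (tau c0 * lam c' / 2))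
          + exp (1 + (A - 1) * tau c0 / tau c0) * exp (- ((A - 1) * tau c0 * lam c0)) / (1 - exp (- ((A - 1) * tau c0 / tau c0)))"
        by (rule U1[OF c'(1,2) elim(1) elim(2) u])
      also have "(A - 1) * tau c0 / tau c0 = A - 1" using tp by simp
      also have "(A - 1) * tau c0 * lam c0 = (A - 1) * (tau c0 * lam c0)" by simp
      finally have "L (tau c0 + (A - 1) * tau c0) \<le> e" using elim(3,4) c'(3) by linarith
      moreover have "tau c0 + (A - 1) * tau c0 = A * t n" using tn by (simp add: algebra_simps)
      ultimately show ?case by simp
    qed
  qed
  have low: "filterlim (\<lambda>n. LV (V n) (A * t n)) at_top sequentially" if A: "0 < A" "A < 1" for A
  proof -
    have "filterlim (\<lambda>n. (1 - A)/2 * (tauV (V n) c0 * lamV (V n) c0)) at_top sequentially"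
      by (intro filterlim_tendsto_pos_mult_at_top[OF tendsto_const] H c0) (use A in simp)
    then have "filterlim (\<lambda>n. exp ((1 - A)/2 * (tauV (V n) c0 * lamV (V n) c0))) at_top sequentially"
      by (rule filterlim_compose[OF exp_at_top])
    then have "filterlim (\<lambda>n. -1 + exp ((1 - A)/2 * (tauV (V n) c0 * lamV (V n) c0))) at_top sequentially"
      by (rule filterlim_tendsto_add_at_top[OF tendsto_const])
    then show ?thesis
    proof (rule filterlim_at_top_mono)
      show "\<forall>\<^sub>F n in sequentially. -1 + exp ((1 - A)/2 * (tauV (V n) c0 * lamV (V n) c0)) \<le> LV (V n) (A * t n)"
        using ev_good[of c0]
      proof eventually_elim
        case (elim n)
        interpret vfun "V n" by (rule vf)
        have tn: "t n = tau c0" using elim(1) unfolding t_def by simp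
        have tp: "0 < tau c0" using tau_pos[OF c0 elim(1)] .
        have "exp ((tau c0 - (1 - A) * tau c0 / 2 - A * tau c0) * lam c0) - 1 \<le> L (A * tau c0)"
          by (rule LB[OF c0 elim(1)]) (use tp A in \<open>auto simp: field_simps\<close>)
        moreover have "(tau c0 - (1 - A) * tau c0 / 2 - A * tau c0) * lam c0 = (1 - A)/2 * (tau c0 * lam c0)"
          by (simp add: field_simps)
        ultimately show ?case using tn by simp
      qed
    qed
  qed
  have "cutoff_time (\<lambda>n. LV (V n)) t" unfolding cut_iff using tpos up low by auto
  then show ?thesis using evt by blast
qed

end

context vseq begin

lemma B1: assumes cut: "cutoff_time (\<lambda>n. LV (V n)) t" and c: "0 < c"
  shows "filterlim (\<lambda>n. t n * lamV (V n) c) at_top sequentially"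
  unfolding filterlim_at_top
proof
  fix Z :: real
  have tpos: "\<And>n. 0 < t n" and to0: "(\<lambda>n. LV (V n) (2 * t n)) \<longlonglongrightarrow> 0" using cut unfolding cut_iff by auto
  have "0 < c * exp (- (4 * Z))" using c by simp
  from order_tendstoD(2)[OF to0 this]
  have ev: "\<forall>\<^sub>F n in sequentially. LV (V n) (2 * t n) < c * exp (- (4 * Z))" .
  show "\<forall>\<^sub>F n in sequentially. Z \<le> t n * lamV (V n) c"
    using ev ev_good[of c]
  proof eventually_elim
    case (elim n)
    interpret vfun "V n" by (rule vf)
    have lp: "0 < lam c" using lam_pos[OF c elim(2)] .
    have vc: "c < V n (2 * lam c)" using above_lam[OF elim(2)] lp by simp
    have a1: "exp (- (2 * t n) * (2 * lam c)) * V n (2 * lam c) \<le> L (2 * t n)"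
      by (rule L_lower) (use tpos[of n] lp in auto)
    have a2: "exp (- (2 * t n) * (2 * lam c)) * c \<le> exp (- (2 * t n) * (2 * lam c)) * V n (2 * lam c)"
      by (rule mult_left_mono) (use vc in auto)
    from a1 a2 elim(1) have "exp (- (2 * t n) * (2 * lam c)) * c < c * exp (- (4 * Z))" by linarith
    then have "c * exp (- (2 * t n) * (2 * lam c)) < c * exp (- (4 * Z))" by (simp only: mult.commute)
    then have "exp (- (2 * t n) * (2 * lam c)) < exp (- (4 * Z))" using c by (simp only: mult_less_cancel_left_pos)
    then have "- (2 * t n) * (2 * lam c) < - (4 * Z)" by (simp only: exp_less_cancel_iff)
    then show ?case by (simp add: algebra_simps)
  qed
qed

lemma B2: assumes cut: "cutoff_time (\<lambda>n. LV (V n)) t" and e: "0 < e"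
  shows "\<forall>\<^sub>F n in sequentially. t n / 2 \<le> TV (V n) e"
proof -
  have all: "\<forall>a. 0 < a \<and> a < 1 \<longrightarrow> filterlim (\<lambda>n. LV (V n) (a * t n)) at_top sequentially"
    using cut unfolding cut_iff by blast
  have "filterlim (\<lambda>n. LV (V n) ((1/2) * t n)) at_top sequentially" by (rule all[rule_format]) simp
  from ev_ge[OF this, of "e + 1"]
  show ?thesis
  proof eventually_elim
    case (elim n)
    interpret vfun "V n" by (rule vf)
    show ?case
    proof (rule ccontr)
      assume "\<not> t n / 2 \<le> TV (V n) e"
      then have "L (t n / 2) \<le> L (TV (V n) e)" using T_props(1)[OF e] by (intro L_mono) auto
      then show False using T_props(2)[OF e] elim by simp
    qed
  qed
qed

lemma C12: assumes cut: "cutoff_time (\<lambda>n. LV (V n)) t" and e: "0 < e" and c: "0 < c"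
  shows "filterlim (\<lambda>n. TV (V n) e * lamV (V n) c) at_top sequentially"
proof -
  have "filterlim (\<lambda>n. (1/2) * (t n * lamV (V n) c)) at_top sequentially"
    by (intro filterlim_tendsto_pos_mult_at_top[OF tendsto_const] B1[OF cut c]) simp
  then show ?thesis
  proof (rule filterlim_at_top_mono)
    show "\<forall>\<^sub>F n in sequentially. 1 / 2 * (t n * lamV (V n) c) \<le> TV (V n) e * lamV (V n) c"
      using B2[OF cut e] ev_good[of c]
    proof eventually_elim
      case (elim n)
      have "0 < lamV (V n) c" using vfun.lam_pos[OF vf c elim(2)] .
      then have "t n / 2 * lamV (V n) c \<le> TV (V n) e * lamV (V n) c" using elim(1) by (intro mult_right_mono) auto
      then show ?case by simp
    qed
  qed
qed

lemma C14: assumes cut: "cutoff_time (\<lambda>n. LV (V n)) t" and c: "0 < c"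
  shows "filterlim (\<lambda>n. tauV (V n) c * lamV (V n) c) at_top sequentially"
proof -
  have tpos: "\<And>n. 0 < t n" using cut unfolding cut_iff by auto
  have all: "\<forall>a. 0 < a \<and> a < 1 \<longrightarrow> filterlim (\<lambda>n. LV (V n) (a * t n)) at_top sequentially"
    using cut unfolding cut_iff by blast
  have "filterlim (\<lambda>n. LV (V n) ((1/2) * t n)) at_top sequentially" by (rule all[rule_format]) simp
  from ev_ge[OF this, of "2 * c + 3"]
  have ev1: "\<forall>\<^sub>F n in sequentially. 2 * c + 3 \<le> LV (V n) ((1/2) * t n)" .
  have ev2: "\<forall>\<^sub>F n in sequentially. 8 \<le> t n * lamV (V n) c" using ev_ge[OF B1[OF cut c]] .
  have "filterlim (\<lambda>n. (1/8) * (t n * lamV (V n) c)) at_top sequentially"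
    by (intro filterlim_tendsto_pos_mult_at_top[OF tendsto_const] B1[OF cut c]) simp
  then show ?thesis
  proof (rule filterlim_at_top_mono)
    show "\<forall>\<^sub>F n in sequentially. 1 / 8 * (t n * lamV (V n) c) \<le> tauV (V n) c * lamV (V n) c"
      using ev1 ev2 ev_good[of c]
    proof eventually_elim
      case (elim n)
      interpret vfun "V n" by (rule vf)
      have lp: "0 < lam c" using lam_pos[OF c elim(3)] .
      have "t n / 8 \<le> tau c"
      proof (rule ccontr)
        assume "\<not> t n / 8 \<le> tau c"
        then have h1: "4 * tau c \<le> t n / 2" by simp
        have h2: "4 \<le> t n / 2 * lam c" using elim(2) by simp
        have "L (t n / 2) \<le> 2 * c + 2 * exp (- (t n / 2 * lam c / 4))" by (rule U2[OF c elim(3) h1 h2])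
        also have "exp (- (t n / 2 * lam c / 4)) \<le> 1" using tpos[of n] lp by simp
        finally have "L (t n / 2) \<le> 2 * c + 2" by simp
        then show False using elim(1) by simp
      qed
      then have "t n / 8 * lam c \<le> tau c * lam c" using lp by (intro mult_right_mono) auto
      then show ?case by simp
    qed
  qed
qed

lemma C36: assumes e: "0 < e" and H: "\<And>c. 0 < c \<Longrightarrow> filterlim (\<lambda>n. TV (V n) e * lamV (V n) c) at_top sequentially"
  and c: "0 < c"
  shows "filterlim (\<lambda>n. tauV (V n) (e/4) * lamV (V n) c) at_top sequentially"
proof -
  have e4: "0 < e/4" using e by simp
  have ev2: "\<forall>\<^sub>F n in sequentially. 8 \<le> TV (V n) e * lamV (V n) (e/4)" using ev_ge[OF H[OF e4]] .
  have ev3: "\<forall>\<^sub>F n in sequentially. 2 * exp (- ((1/8) * (TV (V n) e * lamV (V n) (e/4)))) \<le> e/4"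
  proof -
    have "(\<lambda>n. exp (- ((1/8) * (TV (V n) e * lamV (V n) (e/4))))) \<longlonglongrightarrow> 0"
      by (rule exp_neg_to0) (use H[OF e4] in auto)
    from tendsto_mult_right_zero[OF this, of 2]
    show ?thesis by (rule ev_le) (use e in simp)
  qed
  have "filterlim (\<lambda>n. (1/8) * (TV (V n) e * lamV (V n) c)) at_top sequentially"
    by (intro filterlim_tendsto_pos_mult_at_top[OF tendsto_const] H c) simp
  then show ?thesis
  proof (rule filterlim_at_top_mono)
    show "\<forall>\<^sub>F n in sequentially. 1 / 8 * (TV (V n) e * lamV (V n) c) \<le> tauV (V n) (e/4) * lamV (V n) c"
      using ev2 ev3 ev_good[of "e/4"] ev_good[of c]
    proof eventually_elim
      case (elim n)
      interpret vfun "V n" by (rule vf)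
      have lp: "0 < lam (e/4)" using lam_pos[OF e4 elim(3)] .
      have lpc: "0 < lam c" using lam_pos[OF c elim(4)] .
      define T where "T = TV (V n) e"
      have T0: "0 < T" using elim(1) lp unfolding T_def by (metis mult_le_0_iff not_le order.strict_trans1 zero_less_numeral less_eq_real_def)
      have "T / 8 \<le> tau (e/4)"
      proof (rule ccontr)
        assume "\<not> T / 8 \<le> tau (e/4)"
        then have h1: "4 * tau (e/4) \<le> T / 2" by simp
        have h2: "4 \<le> T / 2 * lam (e/4)" using elim(1) unfolding T_def by simp
        have "L (T / 2) \<le> 2 * (e/4) + 2 * exp (- (T / 2 * lam (e/4) / 4))" by (rule U2[OF e4 elim(3) h1 h2])
        also have "T / 2 * lam (e/4) / 4 = (1/8) * (T * lam (e/4))" by simp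
        finally have "L (T / 2) \<le> e/2 + e/4" using elim(2) unfolding T_def by simp
        moreover have "e < L (T / 2)" using T_below[OF e, of "T/2"] T0 unfolding T_def by simp
        ultimately show False using e by simp
      qed
      then have "T / 8 * lam c \<le> tau (e/4) * lam c" using lpc by (intro mult_right_mono) auto
      then show ?case unfolding T_def by simp
    qed
  qed
qed

lemma D45: assumes H: "\<And>c. 0 < c \<Longrightarrow> filterlim (\<lambda>n. tauV (V n) c * lamV (V n) c) at_top sequentially"
  and c': "0 < c'" and c: "0 < c"
  shows "filterlim (\<lambda>n. tauV (V n) c' * lamV (V n) c) at_top sequentially"
proof (cases "c' \<le> c")
  case True
  from H[OF c'] show ?thesis
  proof (rule filterlim_at_top_mono)
    show "\<forall>\<^sub>F n in sequentially. tauV (V n) c' * lamV (V n) c' \<le> tauV (V n) c' * lamV (V n) c"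
      using ev_good[of c]
    proof eventually_elim
      case (elim n)
      interpret vfun "V n" by (rule vf)
      have gc': "good c'" using good_mono[OF elim True] .
      show ?case using lam_mono[OF elim True] tau_pos[OF c' gc'] by (intro mult_left_mono) auto
    qed
  qed
next
  case False
  then have cc: "c \<le> c'" by simp
  show ?thesis unfolding filterlim_at_top
  proof
    fix Z :: real
    show "\<forall>\<^sub>F n in sequentially. Z \<le> tauV (V n) c' * lamV (V n) c"
      using ev_ge[OF H[OF c], of "max Z (ln (1 + c') + 1)"] ev_good[of c']
    proof eventually_elim
      case (elim n)
      interpret vfun "V n" by (rule vf)
      have gc: "good c" using good_mono[OF elim(2) cc] .
      have lp: "0 < lam c" using lam_pos[OF c gc] .
      have ta: "tau c \<le> max (tau c') (ln (1 + c') / lam c)" by (rule tau_anti[OF c cc elim(2)])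
      show ?case
      proof (cases "ln (1 + c') / lam c \<le> tau c'")
        case True
        then have "tau c \<le> tau c'" using ta by simp
        then have "tau c * lam c \<le> tau c' * lam c" using lp by (intro mult_right_mono) auto
        then show ?thesis using elim(1) by simp
      next
        case False
        then have "tau c \<le> ln (1 + c') / lam c" using ta by simp
        then have "tau c * lam c \<le> ln (1 + c')" using lp by (simp add: pos_le_divide_eq)
        then show ?thesis using elim(1) by simp
      qed
    qed
  qed
qed

end

context vseq begin

lemma E_bound: assumes H2: "\<forall>e>0. \<forall>c>0. filterlim (\<lambda>n. TV (V n) e * lamV (V n) c) at_top sequentially"
  and e: "0 < e" and d: "0 < d" and c: "0 < c"
  shows "\<forall>\<^sub>F n in sequentially. TV (V n) e \<le> TV (V n) d + 2 * ln (1 + 3 * d / e) / lamV (V n) c"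
proof -
  define c'' where "c'' = min c (e/3)"
  have c'': "0 < c''" "c'' \<le> c" "c'' \<le> e/3" using c e unfolding c''_def by auto
  have ev2: "\<forall>\<^sub>F n in sequentially. c * exp (- ((1/2) * (TV (V n) d * lamV (V n) c''))) \<le> e/3"
  proof -
    have "(\<lambda>n. exp (- ((1/2) * (TV (V n) d * lamV (V n) c'')))) \<longlonglongrightarrow> 0"
      by (rule exp_neg_to0) (use H2[rule_format, OF d c''(1)] in auto)
    from tendsto_mult_right_zero[OF this, of c]
    show ?thesis by (rule ev_le) (use e in simp)
  qed
  show ?thesis using ev2 ev_good[of c]
  proof eventually_elim
    case (elim n)
    interpret vfun "V n" by (rule vf)
    define T where "T = TV (V n) d"
    define s where "s = 2 * ln (1 + 3 * d / e) / lam c"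
    have lp: "0 < lam c" using lam_pos[OF c elim(2)] .
    have T0: "0 \<le> T" "L T \<le> d" using T_props[OF d] unfolding T_def by auto
    have lnp: "0 \<le> ln (1 + 3 * d / e)" using d e by simp
    have s0: "0 \<le> s" unfolding s_def using lnp lp by simp
    have "L (T + s) \<le> c'' + c * exp (- (T * lam c'' / 2)) + exp (- (s * lam c / 2)) * L T"
      by (rule U3[OF c''(1,2) elim(2) T0(1) s0])
    also have "exp (- (s * lam c / 2)) = 1 / (1 + 3 * d / e)"
    proof -
      have "s * lam c / 2 = ln (1 + 3 * d / e)" unfolding s_def using lp by simp
      then have "exp (- (s * lam c / 2)) = exp (- ln (1 + 3 * d / e))" by simp
      moreover have "0 < 3 * d / e" using d e by simp
      then have "0 < 1 + 3 * d / e" by linarith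
      ultimately show ?thesis by (simp add: exp_minus inverse_eq_divide)
    qed
    also have "T * lam c'' / 2 = (1/2) * (T * lam c'')" by simp
    finally have h: "L (T + s) \<le> c'' + c * exp (- ((1/2) * (T * lam c''))) + 1 / (1 + 3 * d / e) * L T" .
    have "1 / (1 + 3 * d / e) * L T \<le> 1 / (1 + 3 * d / e) * d"
      using T0(2) d e by (intro mult_left_mono) auto
    also have "\<dots> \<le> e / 3" using d e by (simp add: field_simps)
    finally have "L (T + s) \<le> e" using h elim(1) c''(3) unfolding T_def by linarith
    then have "TV (V n) e \<le> T + s" using T_props(3)[OF e, of "T + s"] T0 s0 by simp
    then show ?case unfolding T_def s_def .
  qed
qed

lemma O1: assumes H2: "\<forall>e>0. \<forall>c>0. filterlim (\<lambda>n. TV (V n) e * lamV (V n) c) at_top sequentially"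
  and e: "0 < e" and d: "0 < d" and c: "0 < c"
  shows "(\<lambda>n. \<bar>TV (V n) e - TV (V n) d\<bar>) \<in> O(\<lambda>n. 1 / lamV (V n) c)"
proof (rule bigoI)
  define K where "K = 2 * ln (1 + 3 * d / e) + 2 * ln (1 + 3 * e / d)"
  show "\<forall>\<^sub>F n in sequentially. norm \<bar>TV (V n) e - TV (V n) d\<bar> \<le> K * norm (1 / lamV (V n) c)"
    using E_bound[OF H2 e d c] E_bound[OF H2 d e c] ev_good[of c]
  proof eventually_elim
    case (elim n)
    have lp: "0 < lamV (V n) c" using vfun.lam_pos[OF vf c elim(3)] .
    have "\<bar>TV (V n) e - TV (V n) d\<bar> \<le> 2 * ln (1 + 3 * d / e) / lamV (V n) c + 2 * ln (1 + 3 * e / d) / lamV (V n) c"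
    proof -
      have "0 \<le> 2 * ln (1 + 3 * d / e) / lamV (V n) c" "0 \<le> 2 * ln (1 + 3 * e / d) / lamV (V n) c"
        using lp d e by auto
      then show ?thesis using elim(1,2) by linarith
    qed
    also have "\<dots> = K * (1 / lamV (V n) c)" unfolding K_def by (simp add: add_divide_distrib)
    finally show ?case using lp by simp
  qed
qed

lemma F_up: assumes H4: "\<forall>c>0. filterlim (\<lambda>n. tauV (V n) c * lamV (V n) c) at_top sequentially"
  and H5: "\<forall>c'>0. \<forall>c>0. filterlim (\<lambda>n. tauV (V n) c' * lamV (V n) c) at_top sequentially"
  and e: "0 < e" and c: "0 < c"
  shows "\<forall>\<^sub>F n in sequentially. TV (V n) e \<le> tauV (V n) c + sqrt (tauV (V n) c / lamV (V n) c)"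
proof -
  define c' where "c' = min c (e/3)"
  have c': "0 < c'" "c' \<le> c" "c' \<le> e/3" using c e unfolding c'_def by auto
  have ev1: "\<forall>\<^sub>F n in sequentially. 2 \<le> tauV (V n) c * lamV (V n) c" using ev_ge[OF H4[rule_format, OF c]] .
  have ev2: "\<forall>\<^sub>F n in sequentially. c * exp (- ((1/2) * (tauV (V n) c * lamV (V n) c'))) \<le> e/3"
  proof -
    have "(\<lambda>n. exp (- ((1/2) * (tauV (V n) c * lamV (V n) c')))) \<longlonglongrightarrow> 0"
      by (rule exp_neg_to0) (use H5[rule_format, OF c c'(1)] in auto)
    from tendsto_mult_right_zero[OF this, of c]
    show ?thesis by (rule ev_le) (use e in simp)
  qed
  define g where "g x = exp (1 + 1 / x) * exp (- x) / (1 - exp (- (1 / x)))" for x :: real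
  have ev3: "\<forall>\<^sub>F n in sequentially. g (sqrt (tauV (V n) c * lamV (V n) c)) \<le> e/3"
  proof -
    have "filterlim (\<lambda>n. sqrt (tauV (V n) c * lamV (V n) c)) at_top sequentially"
      by (rule filterlim_compose[OF sqrt_at_top H4[rule_format, OF c]])
    from filterlim_compose[OF g_lim[folded g_def] this]
    have "(\<lambda>n. g (sqrt (tauV (V n) c * lamV (V n) c))) \<longlonglongrightarrow> 0" .
    then show ?thesis by (rule ev_le) (use e in simp)
  qed
  show ?thesis using ev1 ev2 ev3 ev_good[of c]
  proof eventually_elim
    case (elim n)
    interpret vfun "V n" by (rule vf)
    have lp: "0 < lam c" using lam_pos[OF c elim(4)] .
    have tp: "0 < tau c" using tau_pos[OF c elim(4)] .
    define u where "u = sqrt (tau c / lam c)"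
    define x where "x = sqrt (tau c * lam c)"
    have up: "0 < u" unfolding u_def using lp tp by simp
    have xp: "0 < x" unfolding x_def using lp tp by simp
    have xu: "x * u = tau c"
    proof -
      have "x * u = sqrt (tau c * lam c * (tau c / lam c))" unfolding x_def u_def by (rule real_sqrt_mult[symmetric])
      also have "tau c * lam c * (tau c / lam c) = (tau c)\<^sup>2" using lp by (simp add: power2_eq_square)
      finally show ?thesis using tp by simp
    qed
    have ul: "u * lam c = x"
    proof -
      have "u * lam c = sqrt (tau c / lam c) * sqrt ((lam c)\<^sup>2)" unfolding u_def using lp by simp
      also have "\<dots> = sqrt (tau c / lam c * (lam c)\<^sup>2)" by (rule real_sqrt_mult[symmetric])
      also have "tau c / lam c * (lam c)\<^sup>2 = tau c * lam c" using lp by (simp add: power2_eq_square)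
      finally show ?thesis unfolding x_def .
    qed
    have ut: "u / tau c = 1 / x" using xu xp up tp by (simp add: field_simps)
    have "L (tau c + u) \<le> c' + c * exp (- (tau c * lam c' / 2))
          + exp (1 + u / tau c) * exp (- (u * lam c)) / (1 - exp (- (u / tau c)))"
      by (rule U1[OF c'(1,2) elim(4) elim(1) up])
    also have "exp (1 + u / tau c) * exp (- (u * lam c)) / (1 - exp (- (u / tau c))) = g x"
      unfolding g_def ut ul ..
    also have "tau c * lam c' / 2 = (1/2) * (tau c * lam c')" by simp
    finally have "L (tau c + u) \<le> e" using elim(2,3) c'(3) unfolding x_def by linarith
    then have "TV (V n) e \<le> tau c + u" using T_props(3)[OF e, of "tau c + u"] tp up by simp
    then show ?case unfolding u_def .
  qed
qed

lemma F_low: assumes e: "0 < e" and c: "0 < c"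
  shows "\<forall>\<^sub>F n in sequentially. tauV (V n) c - (2 + ln (1 + e)) / lamV (V n) c \<le> TV (V n) e"
  using ev_good[of c]
proof eventually_elim
  case (elim n)
  interpret vfun "V n" by (rule vf)
  have lp: "0 < lam c" using lam_pos[OF c elim] .
  define K where "K = 2 + ln (1 + e)"
  have K: "1 \<le> K" unfolding K_def using e by simp
  define t where "t = tau c - K / lam c"
  have T0: "0 \<le> TV (V n) e" "L (TV (V n) e) \<le> e" using T_props[OF e] by auto
  show ?case
  proof (cases "t < 0")
    case True then show ?thesis using T0 unfolding t_def K_def by simp
  next
    case False
    then have t0: "0 \<le> t" by simp
    have il: "0 < 1 / lam c" using lp by simp
    have tt: "t \<le> tau c - 1 / lam c" unfolding t_def using K lp by (simp add: divide_right_mono)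
    have "exp ((tau c - 1 / lam c - t) * lam c) - 1 \<le> L t" by (rule LB[OF c elim il t0 tt])
    also have "(tau c - 1 / lam c - t) * lam c = 1 + ln (1 + e)" unfolding t_def K_def using lp
      by (simp add: field_simps)
    finally have h: "exp (1 + ln (1 + e)) - 1 \<le> L t" .
    have "exp (1 + ln (1 + e)) = exp 1 * (1 + e)" using e by (simp add: exp_add)
    moreover have "1 * (1 + e) < exp 1 * (1 + e)" using e by (intro mult_strict_right_mono) auto
    ultimately have "e < L t" using h by simp
    then have "t \<le> TV (V n) e"
    proof (rule contrapos_pp)
      assume "\<not> t \<le> TV (V n) e"
      then have "L t \<le> L (TV (V n) e)" using T0 by (intro L_mono) auto
      then show "\<not> e < L t" using T0 by simp
    qed
    then show ?thesis unfolding t_def K_def .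
  qed
qed

lemma O2: assumes H4: "\<forall>c>0. filterlim (\<lambda>n. tauV (V n) c * lamV (V n) c) at_top sequentially"
  and H5: "\<forall>c'>0. \<forall>c>0. filterlim (\<lambda>n. tauV (V n) c' * lamV (V n) c) at_top sequentially"
  and e: "0 < e" and c: "0 < c"
  shows "(\<lambda>n. \<bar>TV (V n) e - tauV (V n) c\<bar>) \<in> O(\<lambda>n. sqrt (tauV (V n) c / lamV (V n) c))"
proof (rule bigoI)
  define K where "K = 2 + ln (1 + e)"
  have K: "1 \<le> K" unfolding K_def using e by simp
  show "\<forall>\<^sub>F n in sequentially. norm \<bar>TV (V n) e - tauV (V n) c\<bar> \<le> (K + 1) * norm (sqrt (tauV (V n) c / lamV (V n) c))"
    using F_up[OF H4 H5 e c] F_low[OF e c] ev_good[of c] ev_ge[OF H4[rule_format, OF c], of 1]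
  proof eventually_elim
    case (elim n)
    interpret vfun "V n" by (rule vf)
    have lp: "0 < lam c" using lam_pos[OF c elim(3)] .
    have tp: "0 < tau c" using tau_pos[OF c elim(3)] .
    define u where "u = sqrt (tau c / lam c)"
    have u0: "0 \<le> u" unfolding u_def using lp tp by simp
    have il: "1 / lam c \<le> u" unfolding u_def
    proof (rule real_le_rsqrt)
      have "(1 / lam c)\<^sup>2 = (1 / lam c) * (1 / lam c)" by (simp add: power2_eq_square)
      also have "\<dots> \<le> (tau c * lam c) * (1 / lam c) * (1 / lam c)" using elim(4) lp by (simp add: field_simps)
      also have "\<dots> = tau c / lam c" using lp by (simp add: field_simps)
      finally show "(1 / lam c)\<^sup>2 \<le> tau c / lam c" .
    qed
    have a1: "TV (V n) e - tau c \<le> u" using elim(1) unfolding u_def by simp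
    have a2: "tau c - TV (V n) e \<le> K * u"
    proof -
      have "tau c - TV (V n) e \<le> K / lam c" using elim(2) unfolding K_def by simp
      also have "K / lam c = K * (1 / lam c)" by simp
      also have "\<dots> \<le> K * u" using il K by (intro mult_left_mono) auto
      finally show ?thesis .
    qed
    have "0 \<le> K * u" using u0 K by simp
    moreover have "(K + 1) * u = K * u + u" by (simp add: algebra_simps)
    ultimately have "\<bar>TV (V n) e - tau c\<bar> \<le> (K + 1) * u" using a1 a2 u0 unfolding abs_le_iff by linarith
    then show ?case using u0 unfolding u_def by simp
  qed
qed

end


theorem theorem2p2:
  fixes V :: "nat \<Rightarrow> real \<Rightarrow> real"
  assumes hV: "\<And>n. V n \<in> classV"
    and hL: "filterlim (\<lambda>n. LV (V n) 0) at_top sequentially"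
  defines "C1 \<equiv> has_cutoff (\<lambda>n. LV (V n))"
    and "C2 \<equiv> (\<forall>eps>0. \<forall>c>0.
                 filterlim (\<lambda>n. TV (V n) eps * lamV (V n) c) at_top sequentially)"
    and "C3 \<equiv> (\<exists>eps>0. \<forall>c>0.
                 filterlim (\<lambda>n. TV (V n) eps * lamV (V n) c) at_top sequentially)"
    and "C4 \<equiv> (\<forall>c>0. filterlim (\<lambda>n. tauV (V n) c * lamV (V n) c) at_top sequentially)"
    and "C5 \<equiv> (\<forall>c'>0. \<forall>c>0.
                 filterlim (\<lambda>n. tauV (V n) c' * lamV (V n) c) at_top sequentially)"
    and "C6 \<equiv> (\<exists>c'>0. \<forall>c>0.
                 filterlim (\<lambda>n. tauV (V n) c' * lamV (V n) c) at_top sequentially)"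
  shows "(C1 \<longleftrightarrow> C2) \<and> (C1 \<longleftrightarrow> C3) \<and> (C1 \<longleftrightarrow> C4) \<and> (C1 \<longleftrightarrow> C5) \<and> (C1 \<longleftrightarrow> C6)
         \<and> (C1 \<longrightarrow>
              (\<forall>c>0. \<exists>t. cutoff_time (\<lambda>n. LV (V n)) t
                          \<and> (\<forall>\<^sub>F n in sequentially. t n = tauV (V n) c))
            \<and> (\<forall>eps>0. \<forall>delta>0. \<forall>c>0.
                 (\<lambda>n. \<bar>TV (V n) eps - TV (V n) delta\<bar>)
                   \<in> O(\<lambda>n. 1 / lamV (V n) c))
            \<and> (\<forall>eps>0. \<forall>c>0.
                 (\<lambda>n. \<bar>TV (V n) eps - tauV (V n) c\<bar>)
                   \<in> O(\<lambda>n. sqrt (tauV (V n) c / lamV (V n) c))))"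
proof -
  interpret vseq V by unfold_locales (use hV hL in auto)
  have i16: "C1" if "C6"
  proof -
    from that obtain c0 where c0: "0 < c0" and H: "\<forall>c>0. filterlim (\<lambda>n. tauV (V n) c0 * lamV (V n) c) at_top sequentially"
      unfolding C6_def by blast
    from A_cutoff[OF c0] H obtain t where "cutoff_time (\<lambda>n. LV (V n)) t" by blast
    then show ?thesis unfolding C1_def has_cutoff_def by blast
  qed
  have i12: "C2" if "C1"
  proof -
    from that obtain t where t: "cutoff_time (\<lambda>n. LV (V n)) t" unfolding C1_def has_cutoff_def by blast
    show ?thesis unfolding C2_def using C12[OF t] by blast
  qed
  have i23: "C3" if "C2" using that unfolding C2_def C3_def by (intro exI[of _ 1]) auto
  have i36: "C6" if "C3"
  proof -
    from that obtain e where e: "0 < e" and H: "\<forall>c>0. filterlim (\<lambda>n. TV (V n) e * lamV (V n) c) at_top sequentially"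
      unfolding C3_def by blast
    have "\<forall>c>0. filterlim (\<lambda>n. tauV (V n) (e/4) * lamV (V n) c) at_top sequentially"
      using C36[OF e] H by blast
    then show ?thesis unfolding C6_def using e by (intro exI[of _ "e/4"]) auto
  qed
  have i14: "C4" if "C1"
  proof -
    from that obtain t where t: "cutoff_time (\<lambda>n. LV (V n)) t" unfolding C1_def has_cutoff_def by blast
    show ?thesis unfolding C4_def using C14[OF t] by blast
  qed
  have i45: "C5" if "C4"
    using that D45 unfolding C4_def C5_def by blast
  have i56: "C6" if "C5" using that unfolding C5_def C6_def by (intro exI[of _ 1]) auto
  have main: "(\<forall>c>0. \<exists>t. cutoff_time (\<lambda>n. LV (V n)) t \<and> (\<forall>\<^sub>F n in sequentially. t n = tauV (V n) c))
            \<and> (\<forall>eps>0. \<forall>delta>0. \<forall>c>0.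
                 (\<lambda>n. \<bar>TV (V n) eps - TV (V n) delta\<bar>) \<in> O(\<lambda>n. 1 / lamV (V n) c))
            \<and> (\<forall>eps>0. \<forall>c>0.
                 (\<lambda>n. \<bar>TV (V n) eps - tauV (V n) c\<bar>) \<in> O(\<lambda>n. sqrt (tauV (V n) c / lamV (V n) c)))"
    if "C1"
  proof -
    have h2: "\<forall>e>0. \<forall>c>0. filterlim (\<lambda>n. TV (V n) e * lamV (V n) c) at_top sequentially"
      using i12[OF that] unfolding C2_def .
    have h4: "\<forall>c>0. filterlim (\<lambda>n. tauV (V n) c * lamV (V n) c) at_top sequentially"
      using i14[OF that] unfolding C4_def .
    have h5: "\<forall>c'>0. \<forall>c>0. filterlim (\<lambda>n. tauV (V n) c' * lamV (V n) c) at_top sequentially"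
      using i45[OF i14[OF that]] unfolding C5_def .
    have p1: "\<forall>c>0. \<exists>t. cutoff_time (\<lambda>n. LV (V n)) t \<and> (\<forall>\<^sub>F n in sequentially. t n = tauV (V n) c)"
    proof (intro allI impI)
      fix c :: real assume c: "0 < c"
      show "\<exists>t. cutoff_time (\<lambda>n. LV (V n)) t \<and> (\<forall>\<^sub>F n in sequentially. t n = tauV (V n) c)"
        by (rule A_cutoff[OF c]) (use h5 c in blast)
    qed
    have p2: "\<forall>eps>0. \<forall>delta>0. \<forall>c>0. (\<lambda>n. \<bar>TV (V n) eps - TV (V n) delta\<bar>) \<in> O(\<lambda>n. 1 / lamV (V n) c)"
      using O1[OF h2] by blast
    have p3: "\<forall>eps>0. \<forall>c>0. (\<lambda>n. \<bar>TV (V n) eps - tauV (V n) c\<bar>) \<in> O(\<lambda>n. sqrt (tauV (V n) c / lamV (V n) c))"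
      using O2[OF h4 h5] by blast
    show ?thesis using p1 p2 p3 by blast
  qed
  show ?thesis using i16 i12 i23 i36 i14 i45 i56 main by blast
qed


end
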